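(* Assume $K=o(\sqrt n)$, $\mathbb{E}_0(X_\Gamma)=\omega(1)$ and $\mathbb{E}_0(L^2)=1+o(1)$. Then every estimator $\hat{\mathcal K}$ of the planted set $\mathcal K$ satisfies $\mathrm{ov}(\hat{\mathcal K})=o(K)$.
   Context: Model: $n$ nodes; $\lambda>0$ fixed; $\Gamma$ a fixed graph on $K$ vertices. $\mathbb{P}_0$: $G\sim\mathcal G(n,\lambda/n)$. $\mathbb{P}_1$: $G=G_0\cup G'$, $G_0\sim\mathcal G(n,\lambda/n)$, $G'$ the image of $\Gamma$ under a uniformly random injection $\sigma$ of its vertices into $[n]$ independent of $G_0$; $\mathcal K$ is the image of $\sigma$. $X_\Gamma$ is the number of copies of $\Gamma$ in $G$ (subgraphs of $G$ isomorphic to $\Gamma$), $L=L(G)=\mathbb{P}_1(G)/\mathbb{P}_0(G)$ the likelihood ratio, and $\mathbb{E}_0$ expectation under $\mathbb{P}_0$. An estimator is a set $\hat{\mathcal K}$ of $K$ nodes computed from $G$; its overlap is $\mathrm{ov}(\hat{\mathcal K})=\sum_{i\in[n]}\mathbb{P}_1(i\in\hat{\mathcal K}\cap\mathcal K)$. Asymptotics as $n\to\infty$. *)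

theory Defs
  imports "HOL-Probability.Probability" "HOL-Library.Landau_Symbols"
begin

text \<open>Graphs on the vertex set [n] = {0..<n} are represented by their edge sets;
an edge is a 2-element subset of the vertex set.\<close>

definition graph_edges :: "nat \<Rightarrow> nat set set" where
  "graph_edges n = {e. e \<subseteq> {0..<n} \<and> card e = 2}"

definition ER_pmf :: "nat \<Rightarrow> real \<Rightarrow> nat set set pmf" where
  "ER_pmf n p = map_pmf (\<lambda>f. {e \<in> graph_edges n. f e})
                  (Pi_pmf (graph_edges n) False (\<lambda>_. bernoulli_pmf p))"

definition injs :: "nat \<Rightarrow> nat \<Rightarrow> (nat \<Rightarrow> nat) set" where
  "injs K n = {\<sigma> \<in> {0..<K} \<rightarrow>\<^sub>E {0..<n}. inj_on \<sigma> {0..<K}}"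

definition embed_edges :: "(nat \<Rightarrow> nat) \<Rightarrow> nat set set \<Rightarrow> nat set set" where
  "embed_edges \<sigma> E = (\<lambda>e. \<sigma> ` e) ` E"

definition planted_pmf :: "nat \<Rightarrow> real \<Rightarrow> nat \<Rightarrow> nat set set \<Rightarrow> (nat set set \<times> nat set) pmf" where
  "planted_pmf n p K \<Gamma> =
     bind_pmf (ER_pmf n p) (\<lambda>G0. bind_pmf (pmf_of_set (injs K n)) (\<lambda>\<sigma>.
       return_pmf (G0 \<union> embed_edges \<sigma> \<Gamma>, \<sigma> ` {0..<K})))"

text \<open>Number of copies of Gamma in G: subgraphs (vertex set, edge set) of G isomorphic to Gamma.\<close>
definition copies_count :: "nat \<Rightarrow> nat \<Rightarrow> nat set set \<Rightarrow> nat set set \<Rightarrow> nat" where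
  "copies_count n K \<Gamma> G =
     card {(\<sigma> ` {0..<K}, embed_edges \<sigma> \<Gamma>) | \<sigma>. \<sigma> \<in> injs K n \<and> embed_edges \<sigma> \<Gamma> \<subseteq> G}"

definition likelihood_ratio :: "nat \<Rightarrow> real \<Rightarrow> nat \<Rightarrow> nat set set \<Rightarrow> nat set set \<Rightarrow> real" where
  "likelihood_ratio n p K \<Gamma> G = pmf (map_pmf fst (planted_pmf n p K \<Gamma>)) G / pmf (ER_pmf n p) G"

definition overlap :: "nat \<Rightarrow> real \<Rightarrow> nat \<Rightarrow> nat set set \<Rightarrow> (nat set set \<Rightarrow> nat set) \<Rightarrow> real" where
  "overlap n p K \<Gamma> est =
     (\<Sum>i\<in>{0..<n}. measure_pmf.prob (planted_pmf n p K \<Gamma>) {(G, S). i \<in> est G \<inter> S})"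

end

theory Submission imports Defs "HOL-Analysis.Analysis" begin

lemma pmf_map_inj_superset:
  assumes "inj_on f D" "set_pmf M \<subseteq> D" "x \<in> D"
  shows "pmf (map_pmf f M) (f x) = pmf M x"
proof -
  have "pmf (map_pmf f M) (f x) = measure_pmf.prob M (f -` {f x})" by (simp add: pmf_map)
  also have "\<dots> = measure_pmf.prob M (f -` {f x} \<inter> set_pmf M)" by (simp add: measure_Int_set_pmf)
  also have "f -` {f x} \<inter> set_pmf M = {x} \<inter> set_pmf M"
    using assms by (auto simp: inj_on_def)
  also have "measure_pmf.prob M ({x} \<inter> set_pmf M) = pmf M x"
    by (simp add: measure_Int_set_pmf measure_pmf_single)
  finally show ?thesis .
qed

lemma finite_graph_edges: "finite (graph_edges n)"
  unfolding graph_edges_def by (rule finite_subset[of _ "Pow {0..<n}"]) auto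

lemma pmf_edges:
  assumes fin: "finite E"
  shows "pmf (map_pmf (\<lambda>f. {e\<in>E. f e}) (Pi_pmf E False q)) G =
         (if G \<subseteq> E then \<Prod>e\<in>E. pmf (q e) (e \<in> G) else 0)"
proof (cases "G \<subseteq> E")
  case True
  define D where "D = {f::'a\<Rightarrow>bool. \<forall>x. x \<notin> E \<longrightarrow> f x = False}"
  have inj: "inj_on (\<lambda>f. {e\<in>E. f e}) D"
    unfolding D_def inj_on_def by (auto simp: set_eq_iff fun_eq_iff)
  have sub: "set_pmf (Pi_pmf E False q) \<subseteq> D" unfolding D_def by (rule set_Pi_pmf_subset[OF fin])
  have xD: "(\<lambda>x. x \<in> G) \<in> D" using True unfolding D_def by auto
  have GG: "G = {e\<in>E. (\<lambda>x. x \<in> G) e}" using True by auto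
  have "pmf (map_pmf (\<lambda>f. {e\<in>E. f e}) (Pi_pmf E False q)) G
      = pmf (map_pmf (\<lambda>f. {e\<in>E. f e}) (Pi_pmf E False q)) ({e\<in>E. (\<lambda>x. x \<in> G) e})"
    using GG by simp
  also have "\<dots> = pmf (Pi_pmf E False q) (\<lambda>x. x \<in> G)"
    by (rule pmf_map_inj_superset[OF inj sub xD])
  also have "\<dots> = (\<Prod>e\<in>E. pmf (q e) (e \<in> G))"
    using True by (subst pmf_Pi[OF fin]) auto
  finally show ?thesis using True by simp
next
  case False
  have "G \<notin> set_pmf (map_pmf (\<lambda>f. {e\<in>E. f e}) (Pi_pmf E False q))"
    using False by auto
  then show ?thesis using False by (simp add: set_pmf_eq)
qed

lemma Pi_pmf_map_dep:
  assumes fin: "finite A"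
  shows "Pi_pmf A False (\<lambda>x. map_pmf (h x) (g x)) =
         map_pmf (\<lambda>f x. if x \<in> A then h x (f x) else False) (Pi_pmf A False g)"
proof -
  have "Pi_pmf A False (\<lambda>x. map_pmf (h x) (g x)) =
          Pi_pmf A False (\<lambda>x. g x \<bind> (\<lambda>b. return_pmf (h x b)))"
    by (simp add: map_pmf_def)
  also have "\<dots> = Pi_pmf A False g \<bind> (\<lambda>f. Pi_pmf A False (\<lambda>x. return_pmf (h x (f x))))"
    by (rule Pi_pmf_bind[OF fin])
  also have "\<dots> = Pi_pmf A False g \<bind> (\<lambda>f. return_pmf (\<lambda>x. if x \<in> A then h x (f x) else False))"
    using fin by simp
  also have "\<dots> = map_pmf (\<lambda>f x. if x \<in> A then h x (f x) else False) (Pi_pmf A False g)"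
    by (simp add: map_pmf_def)
  finally show ?thesis .
qed

lemma ER_pmf_alt: "ER_pmf n p = map_pmf (\<lambda>f. {e\<in>graph_edges n. f e}) (Pi_pmf (graph_edges n) False (\<lambda>_. bernoulli_pmf p))"
  by (simp add: ER_pmf_def)

lemma pmf_ER:
  assumes "0 \<le> p" "p \<le> 1"
  shows "pmf (ER_pmf n p) G = (if G \<subseteq> graph_edges n then \<Prod>e\<in>graph_edges n. (if e \<in> G then p else 1 - p) else 0)"
  unfolding ER_pmf_alt using assms
  by (subst pmf_edges[OF finite_graph_edges]) (auto intro!: prod.cong)

lemma set_pmf_ER: "set_pmf (ER_pmf n p) \<subseteq> Pow (graph_edges n)"
  unfolding ER_pmf_def by auto

lemma plant_map:
  assumes S: "S \<subseteq> graph_edges n"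
  shows "map_pmf (\<lambda>G0. G0 \<union> S) (ER_pmf n p) =
     map_pmf (\<lambda>f. {e\<in>graph_edges n. f e})
       (Pi_pmf (graph_edges n) False (\<lambda>x. map_pmf (\<lambda>b. b \<or> x \<in> S) (bernoulli_pmf p)))"
  unfolding ER_pmf_alt
  by (subst Pi_pmf_map_dep[OF finite_graph_edges]) (auto simp: map_pmf_comp intro!: map_pmf_cong dest: subsetD[OF S])

lemma pmf_plant:
  assumes S: "S \<subseteq> graph_edges n" and p: "0 < p" "p \<le> 1"
  shows "pmf (map_pmf (\<lambda>G0. G0 \<union> S) (ER_pmf n p)) G =
     (if S \<subseteq> G then pmf (ER_pmf n p) G / p ^ card S else 0)"
proof -
  let ?E = "graph_edges n"
  let ?q = "\<lambda>x. map_pmf (\<lambda>b. b \<or> x \<in> S) (bernoulli_pmf p)"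
  have q: "pmf (?q x) c = (if x \<in> S then (if c then 1 else 0) else (if c then p else 1 - p))" for x c
  proof (cases "x \<in> S")
    case True
    then have "?q x = return_pmf True" by (simp add: map_pmf_def bind_return_pmf)
    then show ?thesis using True by (auto simp: indicator_def)
  next
    case False
    then have "?q x = bernoulli_pmf p" by (simp add: map_pmf_def bind_return_pmf')
    then show ?thesis using False p by auto
  qed
  have finE: "finite ?E" by (rule finite_graph_edges)
  have finS: "finite S" using S finE by (rule finite_subset)
  have lhs: "pmf (map_pmf (\<lambda>G0. G0 \<union> S) (ER_pmf n p)) G =
      (if G \<subseteq> ?E then \<Prod>e\<in>?E. pmf (?q e) (e \<in> G) else 0)"
    by (simp only: plant_map[OF S] pmf_edges[OF finE])
  show ?thesis
  proof (cases "G \<subseteq> ?E")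
    case False
    then show ?thesis using lhs pmf_ER[of p n G] p S by auto
  next
    case GE: True
    show ?thesis
    proof (cases "S \<subseteq> G")
      case False
      then obtain x where x: "x \<in> S" "x \<notin> G" by auto
      have "(\<Prod>e\<in>?E. pmf (?q e) (e \<in> G)) = 0"
        using x S finE by (intro prod_zero) (auto simp: q)
      then show ?thesis using lhs GE False by simp
    next
      case True
      have split1: "(\<Prod>e\<in>?E. pmf (?q e) (e \<in> G)) = (\<Prod>e\<in>S. pmf (?q e) (e \<in> G)) * (\<Prod>e\<in>?E - S. pmf (?q e) (e \<in> G))"
        using S finE by (metis (no_types, lifting) mult.commute prod.subset_diff)
      have split2: "(\<Prod>e\<in>?E. (if e \<in> G then p else 1 - p)) = (\<Prod>e\<in>S. (if e \<in> G then p else 1 - p)) * (\<Prod>e\<in>?E - S. (if e \<in> G then p else 1 - p))"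
        using S finE by (metis (no_types, lifting) mult.commute prod.subset_diff)
      have a: "(\<Prod>e\<in>S. pmf (?q e) (e \<in> G)) = 1" using True by (auto simp: q intro!: prod.neutral)
      have b: "(\<Prod>e\<in>S. (if e \<in> G then p else 1 - p)) = p ^ card S" using True
        by (simp add: subset_iff)
      have c: "(\<Prod>e\<in>?E - S. pmf (?q e) (e \<in> G)) = (\<Prod>e\<in>?E - S. (if e \<in> G then p else 1 - p))"
        using p by (intro prod.cong) (auto simp: q)
      show ?thesis using lhs GE True split1 split2 a b c pmf_ER[of p n G] p by simp
    qed
  qed
qed


lemma measure_finite_support:
  assumes "finite X" "set_pmf M \<subseteq> X"
  shows "measure_pmf.prob M B = (\<Sum>x\<in>X. pmf M x * indicator B x)"
proof -
  have "measure_pmf.prob M B = measure_pmf.prob M (B \<inter> set_pmf M)" by (simp add: measure_Int_set_pmf)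
  also have "B \<inter> set_pmf M = (B \<inter> X) \<inter> set_pmf M" using assms by auto
  also have "measure_pmf.prob M \<dots> = measure_pmf.prob M (B \<inter> X)" by (simp add: measure_Int_set_pmf)
  also have "\<dots> = sum (pmf M) (B \<inter> X)" using assms by (simp add: measure_measure_pmf_finite)
  also have "\<dots> = (\<Sum>x\<in>X. pmf M x * indicator B x)"
    using assms by (simp add: sum.inter_restrict indicator_def if_distrib Int_commute cong: if_cong)
  finally show ?thesis .
qed

lemma expectation_finite_support:
  assumes "finite X" "set_pmf M \<subseteq> X"
  shows "measure_pmf.expectation M (f::_\<Rightarrow>real) = (\<Sum>x\<in>X. pmf M x * f x)"
  using assms by (subst integral_measure_pmf_real[of X]) (auto simp: mult.commute)

lemma measure_bind_uniform:
  assumes I: "finite I" "I \<noteq> {}" and X: "finite X" "\<And>s. s \<in> I \<Longrightarrow> set_pmf (F s) \<subseteq> X"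
  shows "measure_pmf.prob (bind_pmf (pmf_of_set I) F) A = (\<Sum>s\<in>I. measure_pmf.prob (F s) A) / card I"
proof -
  have pb: "pmf (bind_pmf (pmf_of_set I) F) x = (\<Sum>s\<in>I. pmf (F s) x) / card I" for x
    using I by (simp add: pmf_bind integral_pmf_of_set)
  have sb: "set_pmf (bind_pmf (pmf_of_set I) F) \<subseteq> X" using I X by auto
  have "measure_pmf.prob (bind_pmf (pmf_of_set I) F) A = (\<Sum>x\<in>X. (\<Sum>s\<in>I. pmf (F s) x) / card I * indicator A x)"
    by (simp add: measure_finite_support[OF X(1) sb] pb)
  also have "\<dots> = (\<Sum>s\<in>I. (\<Sum>x\<in>X. pmf (F s) x * indicator A x)) / card I"
    by (simp add: sum_divide_distrib sum_distrib_right sum.swap[of _ X] )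
  also have "\<dots> = (\<Sum>s\<in>I. measure_pmf.prob (F s) A) / card I"
    using X by (simp add: measure_finite_support)
  finally show ?thesis .
qed

lemma finite_injs: "finite (injs K n)"
  unfolding injs_def by (rule finite_subset[of _ "{0..<K} \<rightarrow>\<^sub>E {0..<n}"]) (auto intro: finite_PiE)

lemma injs_nonempty: "K \<le> n \<Longrightarrow> injs K n \<noteq> {}"
proof -
  assume "K \<le> n"
  then have "restrict id {0..<K} \<in> injs K n" unfolding injs_def by (auto simp: inj_on_def)
  then show ?thesis by auto
qed

lemma injsD: "\<sigma> \<in> injs K n \<Longrightarrow> inj_on \<sigma> {0..<K} \<and> \<sigma> ` {0..<K} \<subseteq> {0..<n}"
  unfolding injs_def by auto

lemma card_img_injs: "\<sigma> \<in> injs K n \<Longrightarrow> card (\<sigma> ` {0..<K}) = K"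
  using injsD by (simp add: card_image)

lemma embed_sub:
  assumes "\<sigma> \<in> injs K n" "\<Gamma> \<subseteq> graph_edges K"
  shows "embed_edges \<sigma> \<Gamma> \<subseteq> graph_edges n"
proof
  fix x assume "x \<in> embed_edges \<sigma> \<Gamma>"
  then obtain e where e: "e \<in> \<Gamma>" "x = \<sigma> ` e" unfolding embed_edges_def by auto
  have eK: "e \<subseteq> {0..<K}" "card e = 2" using e assms(2) unfolding graph_edges_def by auto
  have "inj_on \<sigma> e" using injsD[OF assms(1)] eK by (meson inj_on_subset)
  then have "card x = 2" using e eK by (simp add: card_image)
  moreover have "x \<subseteq> {0..<n}" using injsD[OF assms(1)] eK e by auto
  ultimately show "x \<in> graph_edges n" unfolding graph_edges_def by auto
qed


lemma weighted_CS:
  fixes w a b :: "'a \<Rightarrow> real"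
  assumes "\<And>x. x \<in> X \<Longrightarrow> w x \<ge> 0"
  shows "(\<Sum>x\<in>X. w x * a x * b x)\<^sup>2 \<le> (\<Sum>x\<in>X. w x * (a x)\<^sup>2) * (\<Sum>x\<in>X. w x * (b x)\<^sup>2)"
proof -
  have "(\<Sum>x\<in>X. (sqrt (w x) * a x) * (sqrt (w x) * b x))\<^sup>2 \<le>
        (\<Sum>x\<in>X. (sqrt (w x) * a x)\<^sup>2) * (\<Sum>x\<in>X. (sqrt (w x) * b x)\<^sup>2)"
    by (rule Cauchy_Schwarz_ineq_sum)
  moreover have "(\<Sum>x\<in>X. (sqrt (w x) * a x) * (sqrt (w x) * b x)) = (\<Sum>x\<in>X. w x * a x * b x)"
    using assms by (intro sum.cong) (auto simp: algebra_simps)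
  moreover have "(\<Sum>x\<in>X. (sqrt (w x) * a x)\<^sup>2) = (\<Sum>x\<in>X. w x * (a x)\<^sup>2)"
    using assms by (intro sum.cong) (auto simp: power_mult_distrib)
  moreover have "(\<Sum>x\<in>X. (sqrt (w x) * b x)\<^sup>2) = (\<Sum>x\<in>X. w x * (b x)\<^sup>2)"
    using assms by (intro sum.cong) (auto simp: power_mult_distrib)
  ultimately show ?thesis by simp
qed

lemma prob_ER_superset:
  assumes T: "T \<subseteq> graph_edges n" and p: "0 \<le> p" "p \<le> 1"
  shows "measure_pmf.prob (ER_pmf n p) {G. T \<subseteq> G} = p ^ card T"
proof -
  let ?E = "graph_edges n"
  let ?B = "\<lambda>e. if e \<in> T then {True} else (UNIV::bool set)"
  have "measure_pmf.prob (ER_pmf n p) {G. T \<subseteq> G} =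
        measure_pmf.prob (Pi_pmf ?E False (\<lambda>_. bernoulli_pmf p)) ((\<lambda>f. {e\<in>?E. f e}) -` {G. T \<subseteq> G})"
    unfolding ER_pmf_alt by simp
  also have "(\<lambda>f. {e\<in>?E. f e}) -` {G. T \<subseteq> G} = Pi ?E ?B"
    using T by (auto simp: Pi_def)
  also have "measure_pmf.prob (Pi_pmf ?E False (\<lambda>_. bernoulli_pmf p)) (Pi ?E ?B) =
      (\<Prod>e\<in>?E. measure_pmf.prob (bernoulli_pmf p) (?B e))"
    by (rule measure_Pi_pmf_Pi[OF finite_graph_edges])
  also have "\<dots> = (\<Prod>e\<in>?E. if e \<in> T then p else 1)"
    using p by (intro prod.cong) (auto simp: measure_pmf_single)
  also have "\<dots> = p ^ card T"
    using T finite_graph_edges[of n] by (simp add: prod.If_cases Int_absorb1)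
  finally show ?thesis .
qed


lemma swap4: "(\<Sum>a\<in>A. \<Sum>b\<in>B. \<Sum>c\<in>C. \<Sum>d\<in>D. f a b c d) = (\<Sum>c\<in>C. \<Sum>d\<in>D. \<Sum>a\<in>A. \<Sum>b\<in>B. f a b c d)"
proof -
  have "(\<Sum>a\<in>A. \<Sum>b\<in>B. \<Sum>c\<in>C. \<Sum>d\<in>D. f a b c d) = (\<Sum>a\<in>A. \<Sum>c\<in>C. \<Sum>b\<in>B. \<Sum>d\<in>D. f a b c d)"
    by (rule sum.cong[OF refl], rule sum.swap)
  also have "\<dots> = (\<Sum>a\<in>A. \<Sum>c\<in>C. \<Sum>d\<in>D. \<Sum>b\<in>B. f a b c d)"
    by (rule sum.cong[OF refl], rule sum.cong[OF refl], rule sum.swap)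
  also have "\<dots> = (\<Sum>c\<in>C. \<Sum>a\<in>A. \<Sum>d\<in>D. \<Sum>b\<in>B. f a b c d)" by (rule sum.swap)
  also have "\<dots> = (\<Sum>c\<in>C. \<Sum>d\<in>D. \<Sum>a\<in>A. \<Sum>b\<in>B. f a b c d)"
    by (rule sum.cong[OF refl], rule sum.swap)
  finally show ?thesis .
qed

locale fixd =
  fixes n :: nat and p :: real and K :: nat and \<Gamma> :: "nat set set" and A :: "nat set set \<Rightarrow> nat set"
  assumes p0: "0 < p" and p1: "p \<le> 1" and Kn: "K \<le> n" and n0: "0 < n"
    and Gsub: "\<Gamma> \<subseteq> graph_edges K"
    and Avalid: "\<And>G. G \<subseteq> graph_edges n \<Longrightarrow> A G \<subseteq> {0..<n} \<and> card (A G) = K"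
begin

abbreviation "E \<equiv> graph_edges n"
abbreviation "\<Omega> \<equiv> Pow (graph_edges n)"
abbreviation "I \<equiv> injs K n"
abbreviation "N \<equiv> real (card (injs K n))"
definition "S \<sigma> = embed_edges \<sigma> \<Gamma>"
definition "V \<sigma> = \<sigma> ` {0..<K}"
definition "P0 G = pmf (ER_pmf n p) G"
definition "W \<sigma> G = (if S \<sigma> \<subseteq> G then 1 / p ^ card (S \<sigma>) else 0)"
definition "Q \<sigma> = map_pmf (\<lambda>G0. G0 \<union> S \<sigma>) (ER_pmf n p)"
definition "M i G = (\<Sum>\<sigma>\<in>I. W \<sigma> G * of_bool (i \<in> V \<sigma>)) / N"
definition "Lw G = (\<Sum>\<sigma>\<in>I. W \<sigma> G) / N"
definition "c \<sigma> \<sigma>' = (\<Sum>G\<in>\<Omega>. P0 G * W \<sigma> G * W \<sigma>' G)"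

lemma finI: "finite I" by (rule finite_injs)
lemma Ine: "I \<noteq> {}" using Kn by (rule injs_nonempty)
lemma Npos: "N > 0" using finI Ine by (simp add: card_gt_0_iff)
lemma finOmega: "finite \<Omega>" using finite_graph_edges by simp
lemma S_sub: "\<sigma> \<in> I \<Longrightarrow> S \<sigma> \<subseteq> E" unfolding S_def using Gsub by (simp add: embed_sub)
lemma V_sub: "\<sigma> \<in> I \<Longrightarrow> V \<sigma> \<subseteq> {0..<n}" unfolding V_def using injsD by blast
lemma card_V: "\<sigma> \<in> I \<Longrightarrow> card (V \<sigma>) = K" unfolding V_def by (rule card_img_injs)
lemma P0_nonneg: "P0 G \<ge> 0" unfolding P0_def by simp
lemma W_nonneg: "W \<sigma> G \<ge> 0" unfolding W_def using p0 by simp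
lemma sum_P0: "(\<Sum>G\<in>\<Omega>. P0 G) = 1"
proof -
  have "(\<Sum>G\<in>\<Omega>. P0 G) = measure_pmf.prob (ER_pmf n p) \<Omega>"
    unfolding P0_def using finOmega by (simp add: measure_measure_pmf_finite)
  also have "\<dots> = 1" using set_pmf_ER by (simp add: measure_pmf.prob_eq_1 AE_measure_pmf_iff subset_iff)
  finally show ?thesis .
qed

lemma pmf_Q: "\<sigma> \<in> I \<Longrightarrow> pmf (Q \<sigma>) G = P0 G * W \<sigma> G"
  unfolding Q_def P0_def W_def using pmf_plant[OF S_sub p0 p1] by simp

lemma planted_alt: "planted_pmf n p K \<Gamma> =
   bind_pmf (pmf_of_set I) (\<lambda>\<sigma>. map_pmf (\<lambda>G0. (G0 \<union> S \<sigma>, V \<sigma>)) (ER_pmf n p))"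
  unfolding planted_pmf_def S_def V_def
  by (subst bind_commute_pmf) (simp add: map_pmf_def)


lemma prob_planted_i:
  "measure_pmf.prob (planted_pmf n p K \<Gamma>) {(G, T). i \<in> A G \<inter> T} =
   (\<Sum>\<sigma>\<in>I. \<Sum>G\<in>\<Omega>. P0 G * W \<sigma> G * (of_bool (i \<in> A G) * of_bool (i \<in> V \<sigma>))) / N"
proof -
  let ?F = "\<lambda>\<sigma>. map_pmf (\<lambda>G0. (G0 \<union> S \<sigma>, V \<sigma>)) (ER_pmf n p)"
  have X: "set_pmf (?F \<sigma>) \<subseteq> \<Omega> \<times> Pow {0..<n}" if "\<sigma> \<in> I" for \<sigma>
    using set_pmf_ER[of n p] S_sub[OF that] V_sub[OF that] by auto
  have "measure_pmf.prob (planted_pmf n p K \<Gamma>) {(G, T). i \<in> A G \<inter> T} =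
        (\<Sum>\<sigma>\<in>I. measure_pmf.prob (?F \<sigma>) {(G, T). i \<in> A G \<inter> T}) / N"
    unfolding planted_alt
    by (rule measure_bind_uniform[OF finI Ine _ X]) (use finOmega in auto)
  also have "\<dots> = (\<Sum>\<sigma>\<in>I. \<Sum>G\<in>\<Omega>. P0 G * W \<sigma> G * (of_bool (i \<in> A G) * of_bool (i \<in> V \<sigma>))) / N"
  proof (intro arg_cong2[where f="(/)"] sum.cong refl)
    fix \<sigma> assume s: "\<sigma> \<in> I"
    have "measure_pmf.prob (?F \<sigma>) {(G, T). i \<in> A G \<inter> T} = measure_pmf.prob (Q \<sigma>) {G. i \<in> A G \<inter> V \<sigma>}"
      unfolding Q_def by (simp add: vimage_def Collect_conj_eq[symmetric] case_prod_beta)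
    also have "\<dots> = (\<Sum>G\<in>\<Omega>. pmf (Q \<sigma>) G * indicator {G. i \<in> A G \<inter> V \<sigma>} G)"
      by (rule measure_finite_support[OF finOmega]) (use set_pmf_ER[of n p] S_sub[OF s] in \<open>auto simp: Q_def\<close>)
    also have "\<dots> = (\<Sum>G\<in>\<Omega>. P0 G * W \<sigma> G * (of_bool (i \<in> A G) * of_bool (i \<in> V \<sigma>)))"
      by (intro sum.cong refl) (simp add: pmf_Q[OF s] indicator_def)
    finally show "measure_pmf.prob (?F \<sigma>) {(G, T). i \<in> A G \<inter> T} = \<dots>" .
  qed
  finally show ?thesis .
qed

lemma overlap_formula:
  "overlap n p K \<Gamma> A = (\<Sum>G\<in>\<Omega>. \<Sum>i<n. P0 G * of_bool (i \<in> A G) * M i G)"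
proof -
  have "overlap n p K \<Gamma> A = (\<Sum>i<n. (\<Sum>\<sigma>\<in>I. \<Sum>G\<in>\<Omega>. P0 G * W \<sigma> G * (of_bool (i \<in> A G) * of_bool (i \<in> V \<sigma>))) / N)"
    unfolding overlap_def prob_planted_i by (simp add: lessThan_atLeast0)
  also have "\<dots> = (\<Sum>i<n. \<Sum>G\<in>\<Omega>. \<Sum>\<sigma>\<in>I. P0 G * W \<sigma> G * (of_bool (i \<in> A G) * of_bool (i \<in> V \<sigma>)) / N)"
    by (simp add: sum_divide_distrib sum.swap[of _ I])
  also have "\<dots> = (\<Sum>G\<in>\<Omega>. \<Sum>i<n. \<Sum>\<sigma>\<in>I. P0 G * W \<sigma> G * (of_bool (i \<in> A G) * of_bool (i \<in> V \<sigma>)) / N)"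
    by (rule sum.swap)
  also have "\<dots> = (\<Sum>G\<in>\<Omega>. \<Sum>i<n. P0 G * of_bool (i \<in> A G) * M i G)"
    unfolding M_def
    by (intro sum.cong refl) (simp add: sum_divide_distrib sum_distrib_left mult_ac)
  finally show ?thesis .
qed

lemma pmf_fst_planted: "pmf (map_pmf fst (planted_pmf n p K \<Gamma>)) G = P0 G * Lw G"
proof -
  have "map_pmf fst (planted_pmf n p K \<Gamma>) = bind_pmf (pmf_of_set I) Q"
    unfolding planted_alt Q_def by (simp add: map_bind_pmf map_pmf_comp)
  then have "pmf (map_pmf fst (planted_pmf n p K \<Gamma>)) G = (\<Sum>\<sigma>\<in>I. pmf (Q \<sigma>) G) / N"
    using finI Ine by (simp add: pmf_bind integral_pmf_of_set)
  also have "\<dots> = P0 G * Lw G" unfolding Lw_def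
    by (simp add: pmf_Q sum_distrib_left)
  finally show ?thesis .
qed

lemma EL2_formula:
  "measure_pmf.expectation (ER_pmf n p) (\<lambda>G. (likelihood_ratio n p K \<Gamma> G)\<^sup>2) =
   (\<Sum>\<sigma>\<in>I. \<Sum>\<sigma>'\<in>I. c \<sigma> \<sigma>') / N\<^sup>2"
proof -
  have "measure_pmf.expectation (ER_pmf n p) (\<lambda>G. (likelihood_ratio n p K \<Gamma> G)\<^sup>2) =
        (\<Sum>G\<in>\<Omega>. P0 G * (likelihood_ratio n p K \<Gamma> G)\<^sup>2)"
    unfolding P0_def by (rule expectation_finite_support[OF finOmega set_pmf_ER])
  also have "\<dots> = (\<Sum>G\<in>\<Omega>. P0 G * (Lw G)\<^sup>2)"
    by (intro sum.cong refl) (auto simp: likelihood_ratio_def pmf_fst_planted P0_def[symmetric])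
  also have "\<dots> = (\<Sum>G\<in>\<Omega>. \<Sum>\<sigma>\<in>I. \<Sum>\<sigma>'\<in>I. P0 G * W \<sigma> G * W \<sigma>' G / N\<^sup>2)"
    unfolding Lw_def
    by (intro sum.cong refl) (simp add: power2_eq_square sum_product sum_divide_distrib sum_distrib_left mult_ac)
  also have "\<dots> = (\<Sum>\<sigma>\<in>I. \<Sum>\<sigma>'\<in>I. \<Sum>G\<in>\<Omega>. P0 G * W \<sigma> G * W \<sigma>' G / N\<^sup>2)"
    by (simp add: sum.swap[of _ \<Omega>])
  also have "\<dots> = (\<Sum>\<sigma>\<in>I. \<Sum>\<sigma>'\<in>I. c \<sigma> \<sigma>') / N\<^sup>2"
    unfolding c_def by (simp add: sum_divide_distrib)
  finally show ?thesis .
qed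

lemma c_ge1:
  assumes "\<sigma> \<in> I" "\<sigma>' \<in> I"
  shows "c \<sigma> \<sigma>' \<ge> 1"
proof -
  have T: "S \<sigma> \<union> S \<sigma>' \<subseteq> E" using S_sub assms by auto
  have finS: "finite (S \<sigma>)" "finite (S \<sigma>')" using S_sub assms finite_graph_edges finite_subset by blast+
  have "c \<sigma> \<sigma>' = (\<Sum>G\<in>\<Omega>. pmf (ER_pmf n p) G * indicator {G. S \<sigma> \<union> S \<sigma>' \<subseteq> G} G) / (p ^ card (S \<sigma>) * p ^ card (S \<sigma>'))"
    unfolding c_def W_def P0_def by (simp add: sum_divide_distrib indicator_def) (intro sum.cong refl, auto)
  also have "(\<Sum>G\<in>\<Omega>. pmf (ER_pmf n p) G * indicator {G. S \<sigma> \<union> S \<sigma>' \<subseteq> G} G) = p ^ card (S \<sigma> \<union> S \<sigma>')"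
    using measure_finite_support[OF finOmega set_pmf_ER, symmetric] prob_ER_superset[OF T] p0 p1 by simp
  finally have ceq: "c \<sigma> \<sigma>' = p ^ card (S \<sigma> \<union> S \<sigma>') / (p ^ card (S \<sigma>) * p ^ card (S \<sigma>'))" .
  have "p ^ (card (S \<sigma>) + card (S \<sigma>')) \<le> p ^ card (S \<sigma> \<union> S \<sigma>')"
    using p0 p1 card_Un_le by (intro power_decreasing) auto
  then show ?thesis using ceq p0 by (simp add: power_add)
qed


definition "Tm = (\<Sum>G\<in>\<Omega>. \<Sum>i<n. P0 G * (M i G)\<^sup>2)"

lemma M_nonneg: "M i G \<ge> 0"
  unfolding M_def using W_nonneg by (intro divide_nonneg_nonneg sum_nonneg) auto

lemma ov_nonneg: "overlap n p K \<Gamma> A \<ge> 0"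
  unfolding overlap_formula using P0_nonneg M_nonneg by (intro sum_nonneg) auto

lemma sum_of_bool_sub: "B \<subseteq> {0..<n} \<Longrightarrow> (\<Sum>i<n. (of_bool (i \<in> B))::real) = real (card B)"
proof -
  assume B: "B \<subseteq> {0..<n}"
  have "(\<Sum>i<n. (of_bool (i \<in> B))::real) = real (card ({..<n} \<inter> B))"
    by (simp add: Int_def)
  also have "{..<n} \<inter> B = B" using B by auto
  finally show ?thesis .
qed

lemma ov_sq: "(overlap n p K \<Gamma> A)\<^sup>2 \<le> K * Tm"
proof -
  let ?X = "\<Omega> \<times> {..<n}"
  have "overlap n p K \<Gamma> A = (\<Sum>x\<in>?X. P0 (fst x) * of_bool (snd x \<in> A (fst x)) * M (snd x) (fst x))"
    unfolding overlap_formula by (simp add: sum.cartesian_product case_prod_beta)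
  moreover have "(\<Sum>x\<in>?X. P0 (fst x) * of_bool (snd x \<in> A (fst x)) * M (snd x) (fst x))\<^sup>2 \<le>
      (\<Sum>x\<in>?X. P0 (fst x) * (of_bool (snd x \<in> A (fst x)))\<^sup>2) * (\<Sum>x\<in>?X. P0 (fst x) * (M (snd x) (fst x))\<^sup>2)"
    by (rule weighted_CS) (simp add: P0_nonneg)
  moreover have "(\<Sum>x\<in>?X. P0 (fst x) * (M (snd x) (fst x))\<^sup>2) = Tm"
    unfolding Tm_def by (simp add: sum.cartesian_product case_prod_beta)
  moreover have "(\<Sum>x\<in>?X. P0 (fst x) * (of_bool (snd x \<in> A (fst x)))\<^sup>2) = (\<Sum>G\<in>\<Omega>. P0 G * (\<Sum>i<n. of_bool (i \<in> A G)))"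
  proof -
    have "(\<Sum>x\<in>?X. P0 (fst x) * (of_bool (snd x \<in> A (fst x)))\<^sup>2) = (\<Sum>x\<in>?X. P0 (fst x) * of_bool (snd x \<in> A (fst x)))"
      by (intro sum.cong refl) auto
    also have "\<dots> = (\<Sum>G\<in>\<Omega>. \<Sum>i<n. P0 G * of_bool (i \<in> A G))"
      by (simp only: sum.cartesian_product split_beta')
    also have "\<dots> = (\<Sum>G\<in>\<Omega>. P0 G * (\<Sum>i<n. of_bool (i \<in> A G)))"
      by (simp only: sum_distrib_left)
    finally show ?thesis .
  qed
  moreover have "\<dots> = (\<Sum>G\<in>\<Omega>. P0 G * K)"
    using Avalid by (intro sum.cong refl) (simp del: sum_of_bool_eq add: sum_of_bool_sub)
  moreover have "\<dots> = K" using sum_P0 by (simp add: sum_distrib_right[symmetric])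
  ultimately show ?thesis by simp
qed


lemma Msq: "(M i G)\<^sup>2 = (\<Sum>\<sigma>\<in>I. \<Sum>\<sigma>'\<in>I. W \<sigma> G * W \<sigma>' G * (of_bool (i \<in> V \<sigma>) * of_bool (i \<in> V \<sigma>'))) / N\<^sup>2"
proof -
  have "(M i G)\<^sup>2 = (\<Sum>\<sigma>\<in>I. W \<sigma> G * of_bool (i \<in> V \<sigma>)) * (\<Sum>\<sigma>'\<in>I. W \<sigma>' G * of_bool (i \<in> V \<sigma>')) / N\<^sup>2"
    unfolding M_def by (simp add: power2_eq_square)
  also have "(\<Sum>\<sigma>\<in>I. W \<sigma> G * of_bool (i \<in> V \<sigma>)) * (\<Sum>\<sigma>'\<in>I. W \<sigma>' G * of_bool (i \<in> V \<sigma>')) =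
     (\<Sum>\<sigma>\<in>I. \<Sum>\<sigma>'\<in>I. W \<sigma> G * of_bool (i \<in> V \<sigma>) * (W \<sigma>' G * of_bool (i \<in> V \<sigma>')))"
    by (rule sum_product)
  also have "\<dots> = (\<Sum>\<sigma>\<in>I. \<Sum>\<sigma>'\<in>I. W \<sigma> G * W \<sigma>' G * (of_bool (i \<in> V \<sigma>) * of_bool (i \<in> V \<sigma>')))"
    by (intro sum.cong refl) (simp only: mult_ac)
  finally show ?thesis .
qed

lemma card_inter_sum: "\<sigma> \<in> I \<Longrightarrow> (\<Sum>i<n. (of_bool (i \<in> V \<sigma>) * of_bool (i \<in> V \<sigma>'))::real) = real (card (V \<sigma> \<inter> V \<sigma>'))"
proof -
  assume s: "\<sigma> \<in> I"
  have "(\<Sum>i<n. (of_bool (i \<in> V \<sigma>) * of_bool (i \<in> V \<sigma>'))::real) = (\<Sum>i<n. of_bool (i \<in> V \<sigma> \<inter> V \<sigma>'))"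
    by (intro sum.cong refl) auto
  also have "\<dots> = real (card (V \<sigma> \<inter> V \<sigma>'))" using V_sub[OF s] by (intro sum_of_bool_sub) auto
  finally show ?thesis .
qed

lemma Tm_formula: "Tm = (\<Sum>\<sigma>\<in>I. \<Sum>\<sigma>'\<in>I. real (card (V \<sigma> \<inter> V \<sigma>')) * c \<sigma> \<sigma>') / N\<^sup>2"
proof -
  have "Tm = (\<Sum>G\<in>\<Omega>. \<Sum>i<n. \<Sum>\<sigma>\<in>I. \<Sum>\<sigma>'\<in>I. (P0 G * W \<sigma> G * W \<sigma>' G) * (of_bool (i \<in> V \<sigma>) * of_bool (i \<in> V \<sigma>')) / N\<^sup>2)"
    unfolding Tm_def Msq
    by (intro sum.cong refl) (simp only: sum_divide_distrib sum_distrib_left times_divide_eq_right mult.assoc)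
  also have "\<dots> = (\<Sum>\<sigma>\<in>I. \<Sum>\<sigma>'\<in>I. \<Sum>G\<in>\<Omega>. \<Sum>i<n. (P0 G * W \<sigma> G * W \<sigma>' G) * (of_bool (i \<in> V \<sigma>) * of_bool (i \<in> V \<sigma>')) / N\<^sup>2)"
    by (rule swap4)
  also have "\<dots> = (\<Sum>\<sigma>\<in>I. \<Sum>\<sigma>'\<in>I. real (card (V \<sigma> \<inter> V \<sigma>')) * c \<sigma> \<sigma>' / N\<^sup>2)"
  proof (intro sum.cong refl)
    fix \<sigma> \<sigma>' assume s: "\<sigma> \<in> I" "\<sigma>' \<in> I"
    have "(\<Sum>G\<in>\<Omega>. \<Sum>i<n. (P0 G * W \<sigma> G * W \<sigma>' G) * (of_bool (i \<in> V \<sigma>) * of_bool (i \<in> V \<sigma>')) / N\<^sup>2)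
        = (\<Sum>G\<in>\<Omega>. (P0 G * W \<sigma> G * W \<sigma>' G) * (\<Sum>i<n. (of_bool (i \<in> V \<sigma>) * of_bool (i \<in> V \<sigma>'))) / N\<^sup>2)"
      by (simp only: sum_divide_distrib[symmetric] sum_distrib_left[symmetric])
    also have "\<dots> = (\<Sum>G\<in>\<Omega>. (P0 G * W \<sigma> G * W \<sigma>' G) * real (card (V \<sigma> \<inter> V \<sigma>')) / N\<^sup>2)"
      by (simp only: card_inter_sum[OF s(1)])
    also have "\<dots> = real (card (V \<sigma> \<inter> V \<sigma>')) * c \<sigma> \<sigma>' / N\<^sup>2"
      unfolding c_def by (simp add: sum_divide_distrib[symmetric] sum_distrib_left mult_ac)
    finally show "(\<Sum>G\<in>\<Omega>. \<Sum>i<n. (P0 G * W \<sigma> G * W \<sigma>' G) * (of_bool (i \<in> V \<sigma>) * of_bool (i \<in> V \<sigma>')) / N\<^sup>2)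
        = real (card (V \<sigma> \<inter> V \<sigma>')) * c \<sigma> \<sigma>' / N\<^sup>2" .
  qed
  also have "\<dots> = (\<Sum>\<sigma>\<in>I. \<Sum>\<sigma>'\<in>I. real (card (V \<sigma> \<inter> V \<sigma>')) * c \<sigma> \<sigma>') / N\<^sup>2"
    by (simp only: sum_divide_distrib)
  finally show ?thesis .
qed


definition "tau i j x = (if x = i then j else if x = j then i else x)"

lemma count_le:
  assumes "i < n" "j < n"
  shows "card {\<sigma>\<in>I. i \<in> V \<sigma>} \<le> card {\<sigma>\<in>I. j \<in> V \<sigma>}"
proof -
  let ?phi = "\<lambda>\<sigma>. restrict (tau i j \<circ> \<sigma>) {0..<K}"
  have tinj: "tau i j a = tau i j b \<Longrightarrow> a = b" for a b unfolding tau_def by (auto split: if_splits)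
  have inj: "inj_on ?phi {\<sigma>\<in>I. i \<in> V \<sigma>}"
  proof (rule inj_onI)
    fix s1 s2 assume s: "s1 \<in> {\<sigma>\<in>I. i \<in> V \<sigma>}" "s2 \<in> {\<sigma>\<in>I. i \<in> V \<sigma>}" and eq: "?phi s1 = ?phi s2"
    show "s1 = s2"
    proof
      fix x show "s1 x = s2 x"
      proof (cases "x \<in> {0..<K}")
        case True
        then have "tau i j (s1 x) = tau i j (s2 x)" using fun_cong[OF eq, of x] by simp
        then show ?thesis by (rule tinj)
      next
        case False
        then show ?thesis using s unfolding injs_def by (auto simp: PiE_def extensional_def)
      qed
    qed
  qed
  have img: "?phi ` {\<sigma>\<in>I. i \<in> V \<sigma>} \<subseteq> {\<sigma>\<in>I. j \<in> V \<sigma>}"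
  proof
    fix t assume "t \<in> ?phi ` {\<sigma>\<in>I. i \<in> V \<sigma>}"
    then obtain \<sigma> where s: "\<sigma> \<in> I" "i \<in> V \<sigma>" and t: "t = ?phi \<sigma>" by auto
    have si: "inj_on \<sigma> {0..<K}" "\<sigma> ` {0..<K} \<subseteq> {0..<n}" using injsD[OF s(1)] by auto
    have "t \<in> {0..<K} \<rightarrow>\<^sub>E {0..<n}"
      using si assms unfolding t tau_def by auto
    moreover have "inj_on t {0..<K}"
      using si(1) unfolding t inj_on_def by (auto dest: tinj)
    moreover have "j \<in> V t"
    proof -
      obtain x where x: "x \<in> {0..<K}" "\<sigma> x = i" using s(2) unfolding V_def by auto
      then show ?thesis unfolding V_def t by (auto simp: tau_def intro!: image_eqI[of _ _ x])
    qed
    ultimately show "t \<in> {\<sigma>\<in>I. j \<in> V \<sigma>}" unfolding injs_def by auto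
  qed
  show ?thesis
    by (rule card_inj_on_le[OF inj img]) (use finI in auto)
qed

lemma count_val:
  assumes "i < n"
  shows "(\<Sum>\<sigma>\<in>I. (of_bool (i \<in> V \<sigma>))::real) = N * K / n"
proof -
  have eqc: "(\<Sum>\<sigma>\<in>I. (of_bool (j \<in> V \<sigma>))::real) = real (card {\<sigma>\<in>I. i \<in> V \<sigma>})" if "j < n" for j
  proof -
    have "card {\<sigma>\<in>I. j \<in> V \<sigma>} = card {\<sigma>\<in>I. i \<in> V \<sigma>}"
      using count_le[OF that assms] count_le[OF assms that] by simp
    moreover have "(\<Sum>\<sigma>\<in>I. (of_bool (j \<in> V \<sigma>))::real) = real (card {\<sigma>\<in>I. j \<in> V \<sigma>})"
      using finI by (simp add: Int_def)
    ultimately show ?thesis by simp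
  qed
  have "(\<Sum>j<n. \<Sum>\<sigma>\<in>I. (of_bool (j \<in> V \<sigma>))::real) = (\<Sum>\<sigma>\<in>I. \<Sum>j<n. (of_bool (j \<in> V \<sigma>))::real)"
    by (rule sum.swap)
  also have "\<dots> = (\<Sum>\<sigma>\<in>I. real K)"
    by (intro sum.cong refl) (simp del: sum_of_bool_eq add: sum_of_bool_sub V_sub card_V)
  also have "\<dots> = N * K" by simp
  finally have "N * K = (\<Sum>j<n. real (card {\<sigma>\<in>I. i \<in> V \<sigma>}))"
    using eqc by simp
  also have "\<dots> = n * real (card {\<sigma>\<in>I. i \<in> V \<sigma>})" by simp
  finally show ?thesis using eqc[OF assms] n0 by (simp add: field_simps)
qed

lemma sum_card_inter: "(\<Sum>\<sigma>\<in>I. \<Sum>\<sigma>'\<in>I. real (card (V \<sigma> \<inter> V \<sigma>'))) = N\<^sup>2 * K\<^sup>2 / n"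
proof -
  have "(\<Sum>\<sigma>\<in>I. \<Sum>\<sigma>'\<in>I. real (card (V \<sigma> \<inter> V \<sigma>'))) =
        (\<Sum>\<sigma>\<in>I. \<Sum>\<sigma>'\<in>I. \<Sum>i<n. (of_bool (i \<in> V \<sigma>) * of_bool (i \<in> V \<sigma>'))::real)"
    by (intro sum.cong refl) (simp only: card_inter_sum)
  also have "\<dots> = (\<Sum>i<n. \<Sum>\<sigma>\<in>I. \<Sum>\<sigma>'\<in>I. (of_bool (i \<in> V \<sigma>) * of_bool (i \<in> V \<sigma>'))::real)"
  proof -
    have "(\<Sum>\<sigma>\<in>I. \<Sum>\<sigma>'\<in>I. \<Sum>i<n. (of_bool (i \<in> V \<sigma>) * of_bool (i \<in> V \<sigma>'))::real) =
          (\<Sum>\<sigma>\<in>I. \<Sum>i<n. \<Sum>\<sigma>'\<in>I. (of_bool (i \<in> V \<sigma>) * of_bool (i \<in> V \<sigma>'))::real)"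
      by (rule sum.cong[OF refl], rule sum.swap)
    also have "\<dots> = (\<Sum>i<n. \<Sum>\<sigma>\<in>I. \<Sum>\<sigma>'\<in>I. (of_bool (i \<in> V \<sigma>) * of_bool (i \<in> V \<sigma>'))::real)"
      by (rule sum.swap)
    finally show ?thesis .
  qed
  also have "\<dots> = (\<Sum>i<n. (\<Sum>\<sigma>\<in>I. (of_bool (i \<in> V \<sigma>))::real) * (\<Sum>\<sigma>'\<in>I. (of_bool (i \<in> V \<sigma>'))::real))"
    by (simp only: sum_product)
  also have "\<dots> = (\<Sum>i<n. (N * K / n) * (N * K / n))"
    by (intro sum.cong refl) (simp del: sum_of_bool_eq sum_of_bool_mult_eq add: count_val)
  also have "\<dots> = N\<^sup>2 * K\<^sup>2 / n" using n0 by (simp add: power2_eq_square field_simps)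
  finally show ?thesis .
qed

lemma main_bound:
  "(overlap n p K \<Gamma> A)\<^sup>2 \<le> (real K)\<^sup>2 * (K / n +
      (measure_pmf.expectation (ER_pmf n p) (\<lambda>G. (likelihood_ratio n p K \<Gamma> G)\<^sup>2) - 1))"
proof -
  have pt: "real (card (V \<sigma> \<inter> V \<sigma>')) * c \<sigma> \<sigma>' \<le> real (card (V \<sigma> \<inter> V \<sigma>')) + K * (c \<sigma> \<sigma>' - 1)"
    if s: "\<sigma> \<in> I" "\<sigma>' \<in> I" for \<sigma> \<sigma>'
  proof -
    have "card (V \<sigma> \<inter> V \<sigma>') \<le> card (V \<sigma>)"
      using V_sub[OF s(1)] by (intro card_mono) (auto intro: finite_subset)
    then have "real (card (V \<sigma> \<inter> V \<sigma>')) \<le> K" using card_V[OF s(1)] by simp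
    moreover have "c \<sigma> \<sigma>' - 1 \<ge> 0" using c_ge1[OF s] by simp
    ultimately have "real (card (V \<sigma> \<inter> V \<sigma>')) * (c \<sigma> \<sigma>' - 1) \<le> K * (c \<sigma> \<sigma>' - 1)"
      by (rule mult_right_mono)
    then show ?thesis by (simp add: algebra_simps)
  qed
  have "Tm \<le> (\<Sum>\<sigma>\<in>I. \<Sum>\<sigma>'\<in>I. real (card (V \<sigma> \<inter> V \<sigma>')) + K * (c \<sigma> \<sigma>' - 1)) / N\<^sup>2"
    unfolding Tm_formula using Npos
    by (intro divide_right_mono sum_mono pt) auto
  also have "\<dots> = ((\<Sum>\<sigma>\<in>I. \<Sum>\<sigma>'\<in>I. real (card (V \<sigma> \<inter> V \<sigma>'))) + K * ((\<Sum>\<sigma>\<in>I. \<Sum>\<sigma>'\<in>I. c \<sigma> \<sigma>') - N\<^sup>2)) / N\<^sup>2"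
    by (simp add: sum.distrib sum_subtractf sum_distrib_left power2_eq_square right_diff_distrib)
  also have "\<dots> = (real K)\<^sup>2 / n + K * ((\<Sum>\<sigma>\<in>I. \<Sum>\<sigma>'\<in>I. c \<sigma> \<sigma>') / N\<^sup>2 - 1)"
    unfolding sum_card_inter using Npos by (simp add: field_simps)
  finally have "Tm \<le> (real K)\<^sup>2 / n + K * (measure_pmf.expectation (ER_pmf n p) (\<lambda>G. (likelihood_ratio n p K \<Gamma> G)\<^sup>2) - 1)"
    unfolding EL2_formula .
  then have "K * Tm \<le> K * ((real K)\<^sup>2 / n + K * (measure_pmf.expectation (ER_pmf n p) (\<lambda>G. (likelihood_ratio n p K \<Gamma> G)\<^sup>2) - 1))"
    by (rule mult_left_mono) simp
  also have "\<dots> = (real K)\<^sup>2 * (K / n + (measure_pmf.expectation (ER_pmf n p) (\<lambda>G. (likelihood_ratio n p K \<Gamma> G)\<^sup>2) - 1))"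
    by (simp add: power2_eq_square algebra_simps)
  finally show ?thesis using ov_sq by linarith
qed

end


lemma sqrt_le_self_nat: "(n::nat) \<ge> 1 \<Longrightarrow> sqrt (real n) \<le> real n"
proof -
  assume "n \<ge> 1"
  then have "real n * 1 \<le> real n * real n" by (intro mult_left_mono) auto
  then have "sqrt (real n) \<le> sqrt (real n * real n)" by (intro real_sqrt_le_mono) simp
  then show ?thesis by simp
qed

theorem theorem5:
  fixes lam :: real and K :: "nat \<Rightarrow> nat" and \<Gamma> :: "nat \<Rightarrow> nat set set"
    and est :: "nat \<Rightarrow> nat set set \<Rightarrow> nat set"
  assumes lam_pos: "lam > 0"
    and Gamma_graph: "\<And>n. \<Gamma> n \<subseteq> graph_edges (K n)"
    and K_small: "(\<lambda>n. real (K n)) \<in> o(\<lambda>n. sqrt (real n))"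
    and EX_large: "filterlim (\<lambda>n. measure_pmf.expectation (ER_pmf n (lam / real n))
                       (\<lambda>G. real (copies_count n (K n) (\<Gamma> n) G))) at_top sequentially"
    and EL2: "(\<lambda>n. measure_pmf.expectation (ER_pmf n (lam / real n))
                 (\<lambda>G. (likelihood_ratio n (lam / real n) (K n) (\<Gamma> n) G)\<^sup>2)) \<longlonglongrightarrow> 1"
    and est_valid: "\<forall>\<^sub>F n in sequentially. \<forall>G. G \<subseteq> graph_edges n \<longrightarrow>
                       est n G \<subseteq> {0..<n} \<and> card (est n G) = K n"
  shows "(\<lambda>n. overlap n (lam / real n) (K n) (\<Gamma> n) (est n)) \<in> o(\<lambda>n. real (K n))"
proof -
  define L2 where "L2 n = measure_pmf.expectation (ER_pmf n (lam / real n))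
                 (\<lambda>G. (likelihood_ratio n (lam / real n) (K n) (\<Gamma> n) G)\<^sup>2)" for n
  define ov where "ov n = overlap n (lam / real n) (K n) (\<Gamma> n) (est n)" for n
  define \<delta> where "\<delta> n = real (K n) / real n + (L2 n - 1)" for n
  have Kle: "\<forall>\<^sub>F n in sequentially. real (K n) \<le> sqrt (real n)"
    using landau_o.smallD[OF K_small, of 1] by simp
  have ev_n: "\<forall>\<^sub>F n in sequentially. n \<ge> max 1 (nat \<lceil>lam\<rceil> + 1)"
    by (rule eventually_ge_at_top)
  have bound: "\<forall>\<^sub>F n in sequentially. 0 \<le> ov n \<and> (ov n)\<^sup>2 \<le> (real (K n))\<^sup>2 * \<delta> n"
    using Kle ev_n est_valid
  proof eventually_elim
    case (elim n)
    have n1: "n \<ge> 1" and nl: "real n > lam" using elim(2) by linarith+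
    have Kn: "K n \<le> n"
    proof -
      have "sqrt (real n) \<le> real n" using n1 sqrt_le_self_nat by blast
      then show ?thesis using elim(1) by linarith
    qed
    interpret fixd n "lam / real n" "K n" "\<Gamma> n" "est n"
      by unfold_locales (use lam_pos n1 nl Kn Gamma_graph elim(3) in auto)
    show ?case using ov_nonneg main_bound unfolding ov_def \<delta>_def L2_def by auto
  qed
  have Kn0: "(\<lambda>n. real (K n) / real n) \<longlonglongrightarrow> 0"
  proof (rule tendsto_sandwich[of "\<lambda>_. 0" _ _ "\<lambda>n. real (K n) / sqrt (real n)"])
    show "\<forall>\<^sub>F n in sequentially. 0 \<le> real (K n) / real n" by simp
    show "\<forall>\<^sub>F n in sequentially. real (K n) / real n \<le> real (K n) / sqrt (real n)"
      using eventually_ge_at_top[of 1]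
    proof eventually_elim
      case (elim n)
      have "sqrt (real n) \<le> real n" using elim sqrt_le_self_nat by blast
      moreover have "0 < sqrt (real n)" using elim by simp
      ultimately show ?case by (intro divide_left_mono) auto
    qed
    show "(\<lambda>n. 0::real) \<longlonglongrightarrow> 0" by simp
    show "(\<lambda>n. real (K n) / sqrt (real n)) \<longlonglongrightarrow> 0" by (rule smalloD_tendsto[OF K_small])
  qed
  have d0: "\<delta> \<longlonglongrightarrow> 0"
  proof -
    have "(\<lambda>n. real (K n) / real n + (L2 n - 1)) \<longlonglongrightarrow> 0 + (1 - 1)"
      by (intro tendsto_intros Kn0) (use EL2 in \<open>simp add: L2_def\<close>)
    then have "(\<lambda>n. real (K n) / real n + (L2 n - 1)) \<longlonglongrightarrow> 0" by simp
    moreover have "\<delta> = (\<lambda>n. real (K n) / real n + (L2 n - 1))" by (rule ext) (simp only: \<delta>_def)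
    ultimately show ?thesis by (simp only:)
  qed
  show ?thesis
  proof (rule landau_o.smallI)
    fix c :: real assume c: "c > 0"
    have c2: "c\<^sup>2 > 0" using c by simp
    have ev: "\<forall>\<^sub>F n in sequentially. \<delta> n < c\<^sup>2"
      by (rule order_tendstoD(2)[OF d0 c2])
    have "\<forall>\<^sub>F n in sequentially. ov n \<le> c * real (K n)"
      using ev bound
    proof eventually_elim
      case (elim n)
      have o0: "0 \<le> ov n" and osq: "(ov n)\<^sup>2 \<le> (real (K n))\<^sup>2 * \<delta> n" using elim(2) by auto
      have "(real (K n))\<^sup>2 * \<delta> n \<le> (real (K n))\<^sup>2 * c\<^sup>2"
        using elim(1) by (intro mult_left_mono) auto
      also have "\<dots> = (c * real (K n))\<^sup>2" by (simp only: power_mult_distrib mult.commute)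
      finally have "(ov n)\<^sup>2 \<le> (c * real (K n))\<^sup>2" using osq by linarith
      then show "ov n \<le> c * real (K n)"
        by (rule power2_le_imp_le) (use c in simp)
    qed
    moreover have "\<forall>\<^sub>F n in sequentially. 0 \<le> ov n" using bound by (rule eventually_mono) auto
    ultimately show "\<forall>\<^sub>F n in sequentially. norm (overlap n (lam / real n) (K n) (\<Gamma> n) (est n)) \<le> c * norm (real (K n))"
    proof eventually_elim
      case (elim n)
      then show ?case unfolding ov_def by simp
    qed
  qed
qed

end
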